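(* Let $G=(V,E)$ be a tree with $n$ nodes and maximum degree $\Delta$, and let $S_0=\{r\}$. Then, both for random and for adversarial \textsc{RPull}, with high probability all nodes of $V$ are informed within $O\big(\max_{p} D_p+\Delta\log n\big)$ rounds, where the maximum is over all paths $p$ in $G$ and $D_p=\sum_{w\in p} d_w$ is the sum of the degrees of the nodes on $p$.
   Context: Rumor spreading proceeds in synchronous rounds. \textsc{RPull}: in each round, every uninformed node sends a request to a uniformly random neighbor; every informed node $v$ receiving a nonempty set $R_v$ of requests selects exactly one node of $R_v$, which learns the rumor. In adversarial \textsc{RPull} the selected node is chosen by an adaptive adversary; in random \textsc{RPull} it is chosen uniformly at random, independently across nodes and rounds. "With high probability" means with probability at least $1-n^{-c}$ for some constant $c\ge1$. *)

theory Defs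
  imports "HOL-Probability.Probability"
begin

definition graph :: "nat set \<Rightarrow> (nat \<Rightarrow> nat \<Rightarrow> bool) \<Rightarrow> bool" where
  "graph V E \<longleftrightarrow> finite V \<and> (\<forall>u v. E u v \<longrightarrow> u \<in> V \<and> v \<in> V)
     \<and> (\<forall>u v. E u v \<longrightarrow> E v u) \<and> (\<forall>u. \<not> E u u)"

definition is_path :: "nat set \<Rightarrow> (nat \<Rightarrow> nat \<Rightarrow> bool) \<Rightarrow> nat list \<Rightarrow> bool" where
  "is_path V E p \<longleftrightarrow> p \<noteq> [] \<and> distinct p \<and> set p \<subseteq> V
     \<and> (\<forall>i. Suc i < length p \<longrightarrow> E (p ! i) (p ! Suc i))"

definition is_tree :: "nat set \<Rightarrow> (nat \<Rightarrow> nat \<Rightarrow> bool) \<Rightarrow> bool" where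
  "is_tree V E \<longleftrightarrow> graph V E \<and> V \<noteq> {} \<and>
     (\<forall>u\<in>V. \<forall>v\<in>V. \<exists>!p. is_path V E p \<and> hd p = u \<and> last p = v)"

definition nbrs :: "(nat \<Rightarrow> nat \<Rightarrow> bool) \<Rightarrow> nat \<Rightarrow> nat set" where
  "nbrs E u = {v. E u v}"

definition deg :: "(nat \<Rightarrow> nat \<Rightarrow> bool) \<Rightarrow> nat \<Rightarrow> nat" where
  "deg E u = card (nbrs E u)"

definition max_deg :: "nat set \<Rightarrow> (nat \<Rightarrow> nat \<Rightarrow> bool) \<Rightarrow> nat" where
  "max_deg V E = Max (deg E ` V)"

definition max_path_deg :: "nat set \<Rightarrow> (nat \<Rightarrow> nat \<Rightarrow> bool) \<Rightarrow> nat" where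
  "max_path_deg V E = Max {(\<Sum>w\<leftarrow>p. deg E w) | p. is_path V E p}"

definition req :: "nat set \<Rightarrow> nat set \<Rightarrow> (nat \<Rightarrow> nat) \<Rightarrow> nat \<Rightarrow> nat set" where
  "req V S N v = {u \<in> V - S. N u = v}"

definition active :: "nat set \<Rightarrow> nat set \<Rightarrow> (nat \<Rightarrow> nat) \<Rightarrow> nat set" where
  "active V S N = {v \<in> S. req V S N v \<noteq> {}}"

text \<open>A selection rule: given the history of all request functions so far (the last one being
  the current round's), the informed set S and the current requests N, a distribution
  over the set of newly informed nodes.\<close>
type_synonym selrule = "(nat \<Rightarrow> nat) list \<Rightarrow> nat set \<Rightarrow> (nat \<Rightarrow> nat) \<Rightarrow> nat set pmf"

definition random_sel :: "nat set \<Rightarrow> selrule" where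
  "random_sel V h S N =
     map_pmf (\<lambda>f. f ` active V S N)
       (Pi_pmf (active V S N) 0 (\<lambda>v. pmf_of_set (req V S N v)))"

text \<open>Adversarial RPull: an adaptive adversary sees the full history (all requests so far,
  hence all states) and names the node to serve; an invalid choice is replaced by some
  valid one (which is again an admissible adversary choice).\<close>
type_synonym adversary = "(nat \<Rightarrow> nat) list \<Rightarrow> nat \<Rightarrow> nat"

definition adv_pick :: "nat set \<Rightarrow> adversary \<Rightarrow> (nat \<Rightarrow> nat) list \<Rightarrow> nat set \<Rightarrow> (nat \<Rightarrow> nat) \<Rightarrow> nat \<Rightarrow> nat" where
  "adv_pick V adv h S N v =
     (if adv h v \<in> req V S N v then adv h v else (SOME u. u \<in> req V S N v))"

definition adv_sel :: "nat set \<Rightarrow> adversary \<Rightarrow> selrule" where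
  "adv_sel V adv h S N = return_pmf (adv_pick V adv h S N ` active V S N)"

text \<open>One round: every uninformed node requests a uniformly random neighbour (independently);
  then the selection rule determines the newly informed nodes.  State = (informed set, history).\<close>
definition rpull_step :: "nat set \<Rightarrow> (nat \<Rightarrow> nat \<Rightarrow> bool) \<Rightarrow> selrule
     \<Rightarrow> nat set \<times> (nat \<Rightarrow> nat) list \<Rightarrow> (nat set \<times> (nat \<Rightarrow> nat) list) pmf" where
  "rpull_step V E sel st =
     (case st of (S, h) \<Rightarrow>
       Pi_pmf (V - S) 0 (\<lambda>u. pmf_of_set (nbrs E u)) \<bind>
         (\<lambda>N. map_pmf (\<lambda>T. (S \<union> T, h @ [N])) (sel (h @ [N]) S N)))"

definition rpull :: "nat set \<Rightarrow> (nat \<Rightarrow> nat \<Rightarrow> bool) \<Rightarrow> selrule \<Rightarrow> nat \<Rightarrow> nat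
     \<Rightarrow> (nat set \<times> (nat \<Rightarrow> nat) list) pmf" where
  "rpull V E sel r t = ((\<lambda>p. p \<bind> rpull_step V E sel) ^^ t) (return_pmf ({r}, []))"

definition all_informed_prob :: "nat set \<Rightarrow> (nat \<Rightarrow> nat \<Rightarrow> bool) \<Rightarrow> selrule \<Rightarrow> nat \<Rightarrow> nat \<Rightarrow> real" where
  "all_informed_prob V E sel r t = measure_pmf.prob (rpull V E sel r t) {st. V \<subseteq> fst st}"

end

theory Submission imports Defs begin

definition jdx :: "nat list \<Rightarrow> nat set \<Rightarrow> nat" where
  "jdx p S = Max {i. i < length p \<and> p ! i \<in> S}"

definition Phi :: "(nat \<Rightarrow> nat \<Rightarrow> bool) \<Rightarrow> nat list \<Rightarrow> nat set \<Rightarrow> nat" where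
  "Phi E p S = card (nbrs E (p ! jdx p S) - S) + 3 * (\<Sum>i\<in>{jdx p S<..<length p}. deg E (p ! i))"

locale pth =
  fixes V E p
  assumes gr: "graph V E" and pne: "p \<noteq> []" and dist: "distinct p"
    and adj: "\<And>i. Suc i < length p \<Longrightarrow> E (p ! i) (p ! Suc i)"
begin

lemma fin_nbrs: "finite (nbrs E u)"
proof -
  have "nbrs E u \<subseteq> V" using gr unfolding graph_def nbrs_def by auto
  thus ?thesis using gr unfolding graph_def by (meson finite_subset)
qed

lemma jdx_props:
  assumes "hd p \<in> S" "last p \<notin> S"
  shows "jdx p S < length p - 1" "p ! jdx p S \<in> S" "p ! Suc (jdx p S) \<notin> S"
    "\<And>i. jdx p S < i \<Longrightarrow> i < length p \<Longrightarrow> p ! i \<notin> S"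
proof -
  let ?A = "{i. i < length p \<and> p ! i \<in> S}"
  have fin: "finite ?A" by auto
  have "0 \<in> ?A" using assms pne by (simp add: hd_conv_nth)
  hence ne: "?A \<noteq> {}" by auto
  have mem: "jdx p S \<in> ?A" unfolding jdx_def using Max_in[OF fin ne] .
  have ge: "\<And>i. i \<in> ?A \<Longrightarrow> i \<le> jdx p S" unfolding jdx_def using fin by simp
  have "length p - 1 \<notin> ?A" using assms pne by (simp add: last_conv_nth)
  hence "jdx p S \<noteq> length p - 1" using mem by auto
  thus "jdx p S < length p - 1" using mem by auto
  show "p ! jdx p S \<in> S" using mem by auto
  show "\<And>i. jdx p S < i \<Longrightarrow> i < length p \<Longrightarrow> p ! i \<notin> S"
    using ge by fastforce
  thus "p ! Suc (jdx p S) \<notin> S" using \<open>jdx p S < length p - 1\<close> by auto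
qed

lemma jdx_mono:
  assumes "hd p \<in> S" "S \<subseteq> S'"
  shows "jdx p S \<le> jdx p S'"
proof -
  let ?A = "{i. i < length p \<and> p ! i \<in> S}"
  let ?B = "{i. i < length p \<and> p ! i \<in> S'}"
  have "0 \<in> ?A" using assms pne by (simp add: hd_conv_nth)
  hence "?A \<noteq> {}" by auto
  moreover have "?A \<subseteq> ?B" using assms by auto
  ultimately show ?thesis unfolding jdx_def by (intro Max_mono) auto
qed

lemma jdx_ge:
  assumes "i < length p" "p ! i \<in> S"
  shows "i \<le> jdx p S"
  unfolding jdx_def using assms by (intro Max_ge) auto

lemma Phi_adv:
  assumes "hd p \<in> S" "last p \<notin> S" "S \<subseteq> S'" "last p \<notin> S'" "jdx p S < jdx p S'"
  shows "Phi E p S' + 1 + 2 * deg E (p ! Suc (jdx p S)) \<le> Phi E p S"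
proof -
  let ?j = "jdx p S" and ?k = "jdx p S'" and ?L = "length p" and ?d = "\<lambda>i. deg E (p ! i)"
  have hdS': "hd p \<in> S'" using assms by auto
  note J = jdx_props[OF assms(1,2)]
  note K = jdx_props[OF hdS' assms(4)]
  have c1: "card (nbrs E (p ! ?k) - S') \<le> ?d ?k"
    unfolding deg_def by (intro card_mono fin_nbrs) auto
  have "p ! Suc ?j \<in> nbrs E (p ! ?j) - S" using adj[of ?j] J unfolding nbrs_def by auto
  hence c2: "1 \<le> card (nbrs E (p ! ?j) - S)"
    by (metis One_nat_def Suc_leI card_gt_0_iff empty_iff finite_Diff fin_nbrs)
  have split: "{?j<..<?L} = {?j<..?k} \<union> {?k<..<?L}" using K assms(5) by auto
  have sumsplit: "(\<Sum>i\<in>{?j<..<?L}. ?d i) = (\<Sum>i\<in>{?j<..?k}. ?d i) + (\<Sum>i\<in>{?k<..<?L}. ?d i)"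
    unfolding split by (rule sum.union_disjoint) auto
  have s1: "?d ?k \<le> (\<Sum>i\<in>{?j<..?k}. ?d i)"
    using assms(5) by (intro member_le_sum) auto
  have s2: "?d (Suc ?j) \<le> (\<Sum>i\<in>{?j<..?k}. ?d i)"
    using assms(5) by (intro member_le_sum) auto
  show ?thesis unfolding Phi_def using c1 c2 s1 s2 sumsplit by linarith
qed

lemma Phi_same:
  assumes "hd p \<in> S" "last p \<notin> S" "S \<subseteq> S'" "last p \<notin> S'" "jdx p S' = jdx p S"
  shows "Phi E p S' \<le> Phi E p S"
    and "S' \<inter> (nbrs E (p ! jdx p S) - S) \<noteq> {} \<Longrightarrow> Phi E p S' + 1 \<le> Phi E p S"
proof -
  have sub: "nbrs E (p ! jdx p S) - S' \<subseteq> nbrs E (p ! jdx p S) - S" using assms by auto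
  show "Phi E p S' \<le> Phi E p S" unfolding Phi_def assms(5)
    using card_mono[OF _ sub] fin_nbrs by auto
  assume "S' \<inter> (nbrs E (p ! jdx p S) - S) \<noteq> {}"
  hence "nbrs E (p ! jdx p S) - S' \<subset> nbrs E (p ! jdx p S) - S" using sub by auto
  hence "card (nbrs E (p ! jdx p S) - S') < card (nbrs E (p ! jdx p S) - S)"
    by (intro psubset_card_mono) (auto simp: fin_nbrs)
  thus "Phi E p S' + 1 \<le> Phi E p S" unfolding Phi_def assms(5) by linarith
qed

lemma Phi_mono:
  assumes "hd p \<in> S" "last p \<notin> S" "S \<subseteq> S'" "last p \<notin> S'"
  shows "Phi E p S' \<le> Phi E p S"
  using Phi_same(1)[OF assms] Phi_adv[OF assms] jdx_mono[OF assms(1,3)]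
  by (cases "jdx p S' = jdx p S") auto

lemma Phi_dec:
  assumes "hd p \<in> S" "last p \<notin> S" "S \<subseteq> S'" "last p \<notin> S'"
    "S' \<inter> (nbrs E (p ! jdx p S) - S) \<noteq> {}"
  shows "Phi E p S' + 1 \<le> Phi E p S"
  using Phi_same(2)[OF assms(1-4) _ assms(5)] Phi_adv[OF assms(1-4)] jdx_mono[OF assms(1,3)]
  by (cases "jdx p S' = jdx p S") auto

lemma Phi_next:
  assumes "hd p \<in> S" "last p \<notin> S" "S \<subseteq> S'" "last p \<notin> S'" "p ! Suc (jdx p S) \<in> S'"
  shows "Phi E p S' + 1 + 2 * deg E (p ! Suc (jdx p S)) \<le> Phi E p S"
proof -
  have "Suc (jdx p S) \<le> jdx p S'"
    using jdx_ge[OF _ assms(5)] jdx_props(1)[OF assms(1,2)] by auto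
  thus ?thesis using Phi_adv[OF assms(1-4)] by auto
qed

end

definition pot :: "(nat \<Rightarrow> nat \<Rightarrow> bool) \<Rightarrow> nat list \<Rightarrow> real \<Rightarrow> nat set \<Rightarrow> ennreal" where
  "pot E p lam S = (if last p \<in> S \<or> hd p \<notin> S then 0 else ennreal (exp (lam * real (Phi E p S))))"

definition sel_ok :: "nat set \<Rightarrow> selrule \<Rightarrow> bool" where
  "sel_ok V sel \<longleftrightarrow> (\<forall>h S N T v. T \<in> set_pmf (sel h S N) \<longrightarrow> v \<in> active V S N \<longrightarrow>
      (\<exists>u\<in>T. u \<in> req V S N v))"

lemma sel_ok_random: "finite V \<Longrightarrow> sel_ok V (random_sel V)"
  unfolding sel_ok_def random_sel_def
proof (intro allI impI)
  fix h S N T v assume fin: "finite V"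
    and T: "T \<in> set_pmf (map_pmf (\<lambda>f. f ` active V S N)
            (Pi_pmf (active V S N) 0 (\<lambda>v. pmf_of_set (req V S N v))))"
    and v: "v \<in> active V S N"
  from T obtain f where f: "f \<in> set_pmf (Pi_pmf (active V S N) 0 (\<lambda>v. pmf_of_set (req V S N v)))"
    and Tf: "T = f ` active V S N" by auto
  have finA: "finite (active V S N)" 
  proof (rule finite_subset[OF _ finite_imageI[OF fin]])
    show "active V S N \<subseteq> N ` V" unfolding active_def req_def by blast
  qed
  have ne: "req V S N v \<noteq> {}" "finite (req V S N v)" using v fin unfolding active_def req_def by auto
  have "f v \<in> set_pmf (pmf_of_set (req V S N v))" using f v finA
    by (auto simp: set_Pi_pmf PiE_dflt_def)
  hence "f v \<in> req V S N v" using ne by simp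
  thus "\<exists>u\<in>T. u \<in> req V S N v" using Tf v by auto
qed

lemma sel_ok_adv: "sel_ok V (adv_sel V adv)"
  unfolding sel_ok_def adv_sel_def
proof (intro allI impI)
  fix h S N T v assume T: "T \<in> set_pmf (return_pmf (adv_pick V adv h S N ` active V S N))"
    and v: "v \<in> active V S N"
  have "adv_pick V adv h S N v \<in> req V S N v"
    using v unfolding adv_pick_def active_def by (auto intro: someI)
  thus "\<exists>u\<in>T. u \<in> req V S N v" using T v by auto
qed

lemma num_ineq:
  fixes lam d :: real
  assumes lam: "lam > 0" and d: "d \<ge> 1" and x: "2 * lam * d \<le> 1"
  shows "(exp (- lam * (1 + 2 * d)) + (d - 1)) / d \<le> exp (- lam)"
proof -
  define x where "x = 2 * lam * d"
  have x0: "x \<ge> 0" "x \<le> 1" using lam d x unfolding x_def by auto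
  have e1: "exp (- lam * (1 + 2 * d)) = exp (- lam) * exp (- x)"
    unfolding x_def by (simp add: exp_add[symmetric] algebra_simps)
  have "exp x \<ge> 1 + x" by (rule exp_ge_add_one_self)
  hence ex: "exp (- x) \<le> 1 / (1 + x)" using x0
    by (simp add: exp_minus field_simps)
  have el: "exp (- lam) \<ge> 1 - lam" using exp_ge_add_one_self[of "-lam"] by simp
  have pos: "exp (- lam) > 0" by simp
  have "exp (- lam * (1 + 2 * d)) \<le> exp (- lam) * (1 / (1 + x))"
    unfolding e1 using ex pos by (intro mult_left_mono) auto
  moreover have "exp (- lam) * (1 / (1 + x)) + (d - 1) \<le> d * exp (- lam)"
  proof -
    have "d * x \<ge> 0" using d x0 by simp
    hence "1 \<le> d * (1 + x)" using d by (simp add: algebra_simps)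
    hence "1 / (1 + x) \<le> d" using x0 by (simp add: field_simps)
    hence nn: "d - 1 / (1 + x) \<ge> 0" by simp
    have "(1 - lam) * (d - 1 / (1 + x)) \<le> exp (- lam) * (d - 1 / (1 + x))"
      using el nn by (intro mult_right_mono) auto
    moreover have "d - 1 \<le> (1 - lam) * (d - 1 / (1 + x))"
    proof -
      have "x / (1 + x) \<ge> x / 2" using x0 by (intro divide_left_mono) auto
      moreover have "lam / (1 + x) \<ge> 0" using lam x0 by auto
      moreover have "(1 - lam) * (d - 1 / (1 + x)) = d - 1 + (x / (1 + x) - x / 2 + lam / (1 + x))"
      proof -
        have ld: "lam * d = x / 2" unfolding x_def by simp
        have "(1 - lam) * (d - 1 / (1 + x)) = d - 1 / (1 + x) - lam * d + lam / (1 + x)"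
          by (simp add: algebra_simps add_divide_distrib[symmetric])
        also have "\<dots> = d - 1 + (x / (1 + x) - x / 2 + lam / (1 + x))"
        proof -
          have "1 / (1 + x) = 1 - x / (1 + x)" using x0 by (simp add: field_simps)
          thus ?thesis using ld by linarith
        qed
        finally show ?thesis .
      qed
      ultimately show ?thesis by linarith
    qed
    ultimately show ?thesis by (simp add: algebra_simps)
  qed
  ultimately have "exp (- lam * (1 + 2 * d)) + (d - 1) \<le> d * exp (- lam)" by linarith
  thus ?thesis using d by (simp add: field_simps)
qed

context pth begin

lemma pot_le:
  assumes lam: "lam \<ge> 0" and S: "hd p \<in> S" "last p \<notin> S" "S \<subseteq> S'"
    and k: "last p \<notin> S' \<Longrightarrow> Phi E p S' + k \<le> Phi E p S"
  shows "pot E p lam S' \<le> pot E p lam S * ennreal (exp (- lam * real k))"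
proof (cases "last p \<in> S'")
  case True thus ?thesis unfolding pot_def by simp
next
  case False
  have "lam * real (Phi E p S') \<le> lam * real (Phi E p S) + (- lam * real k)"
  proof -
    have "real (Phi E p S') + real k \<le> real (Phi E p S)"
      using k[OF False] by (metis of_nat_add of_nat_mono)
    hence "real (Phi E p S') \<le> real (Phi E p S) - real k" by linarith
    hence "lam * real (Phi E p S') \<le> lam * (real (Phi E p S) - real k)"
      using lam by (rule mult_left_mono)
    thus ?thesis by (simp add: algebra_simps)
  qed
  hence "exp (lam * real (Phi E p S')) \<le> exp (lam * real (Phi E p S)) * exp (- lam * real k)"
    by (simp add: exp_add[symmetric])
  thus ?thesis using False S unfolding pot_def
    by (auto simp: ennreal_mult[symmetric] intro!: ennreal_leI)
qed

lemma G_int: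
  assumes nne: "\<forall>u\<in>V. nbrs E u \<noteq> {}" and lam: "lam > 0"
    and b: "b \<in> V - S" and ab: "E a b"
    and dl: "2 * lam * real (deg E b) \<le> 1"
  shows "(\<integral>\<^sup>+N. ennreal (if (\<exists>w\<in>nbrs E a - S - {b}. N w = a) then exp (- lam)
            else if N b = a then exp (- lam * real (1 + 2 * deg E b)) else 1)
          \<partial>Pi_pmf (V - S) 0 (\<lambda>u. pmf_of_set (nbrs E u))) \<le> ennreal (exp (- lam))"
proof -
  define Q where "Q = (\<lambda>u. pmf_of_set (nbrs E u))"
  define A0 where "A0 = V - S - {b}"
  define A where "A = (\<lambda>N::nat\<Rightarrow>nat. \<exists>w\<in>nbrs E a - S - {b}. N w = a)"
  define e1 where "e1 = exp (- lam * real (1 + 2 * deg E b))"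
  define G where "G = (\<lambda>N. ennreal (if A N then exp (- lam) else if N b = a then e1 else 1))"
  have finV: "finite V" using gr unfolding graph_def by auto
  have ins: "V - S = insert b A0" "b \<notin> A0" "finite A0" using b finV unfolding A0_def by auto
  have P: "Pi_pmf (V - S) 0 Q = map_pmf (\<lambda>(y,f). f(b:=y)) (pair_pmf (Q b) (Pi_pmf A0 0 Q))"
    unfolding ins(1) by (rule Pi_pmf_insert[OF ins(3,2)])
  have Aupd: "\<And>f y. A (f(b := y)) = A f" unfolding A_def by auto
  have inner: "\<And>f. (\<integral>\<^sup>+y. G (f(b:=y)) \<partial>Q b) \<le> ennreal (exp (- lam))"
  proof -
    fix f
    show "(\<integral>\<^sup>+y. G (f(b:=y)) \<partial>Q b) \<le> ennreal (exp (- lam))"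
    proof (cases "A f")
      case True
      hence "(\<integral>\<^sup>+y. G (f(b:=y)) \<partial>Q b) = (\<integral>\<^sup>+y. ennreal (exp (- lam)) \<partial>Q b)"
        unfolding G_def Aupd by simp
      also have "\<dots> = ennreal (exp (- lam))" by simp
      finally show ?thesis by simp
    next
      case False
      have bV: "b \<in> V" using b by auto
      have ne: "nbrs E b \<noteq> {}" and fin: "finite (nbrs E b)" using nne bV fin_nbrs by auto
      have aN: "a \<in> nbrs E b" using ab gr unfolding graph_def nbrs_def by auto
      define d where "d = real (deg E b)"
      have d1: "d \<ge> 1" unfolding d_def deg_def using aN fin
        by (metis One_nat_def Suc_leI card_gt_0_iff empty_iff of_nat_1 of_nat_mono)
      have e1pos: "e1 \<ge> 0" unfolding e1_def by simp
      have "(\<integral>\<^sup>+y. G (f(b:=y)) \<partial>Q b) = (\<integral>\<^sup>+y. ennreal (if y = a then e1 else 1) \<partial>Q b)"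
        unfolding G_def Aupd using False by simp
      also have "\<dots> = (\<Sum>y\<in>nbrs E b. ennreal (if y = a then e1 else 1)) / of_nat (card (nbrs E b))"
        unfolding Q_def by (rule nn_integral_pmf_of_set[OF ne fin])
      also have "(\<Sum>y\<in>nbrs E b. ennreal (if y = a then e1 else 1)) = ennreal (\<Sum>y\<in>nbrs E b. (if y = a then e1 else 1))"
        using e1pos by (intro sum_ennreal) auto
      also have "(\<Sum>y\<in>nbrs E b. (if y = a then e1 else 1)) = (\<Sum>y\<in>nbrs E b. (if y = a then e1 - 1 else 0) + 1)"
        by (intro sum.cong) auto
      also have "\<dots> = e1 - 1 + d"
        unfolding sum.distrib using aN fin by (simp add: d_def deg_def)
      also have "of_nat (card (nbrs E b)) = ennreal d"
        unfolding d_def deg_def by (simp add: ennreal_of_nat_eq_real_of_nat)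
      also have "ennreal (e1 - 1 + d) / ennreal d = ennreal ((e1 + (d - 1)) / d)"
        using d1 e1pos by (subst divide_ennreal) (auto simp: algebra_simps)
      also have "\<dots> \<le> ennreal (exp (- lam))"
      proof (intro ennreal_leI)
        have "e1 = exp (- lam * (1 + 2 * d))" unfolding e1_def d_def by simp
        thus "(e1 + (d - 1)) / d \<le> exp (- lam)"
          using num_ineq[OF lam d1] dl unfolding d_def by simp
      qed
      finally show ?thesis .
    qed
  qed
  have "(\<integral>\<^sup>+N. G N \<partial>Pi_pmf (V - S) 0 Q) = (\<integral>\<^sup>+x. G ((\<lambda>(y,f). f(b:=y)) x) \<partial>pair_pmf (Q b) (Pi_pmf A0 0 Q))"
    unfolding P by simp
  also have "\<dots> = (\<integral>\<^sup>+x. G ((\<lambda>(y,f). f(b:=y)) ((\<lambda>(x, y). (y, x)) x)) \<partial>pair_pmf (Pi_pmf A0 0 Q) (Q b))"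
    by (subst pair_commute_pmf) simp
  also have "\<dots> = (\<integral>\<^sup>+f. \<integral>\<^sup>+y. G (f(b:=y)) \<partial>Q b \<partial>Pi_pmf A0 0 Q)"
    by (simp add: nn_integral_pair_pmf')
  also have "\<dots> \<le> (\<integral>\<^sup>+f. ennreal (exp (- lam)) \<partial>Pi_pmf A0 0 Q)"
    by (intro nn_integral_mono inner)
  also have "\<dots> = ennreal (exp (- lam))" by simp
  finally show ?thesis unfolding G_def A_def e1_def Q_def .
qed

lemma step_bound:
  assumes nne: "\<forall>u\<in>V. nbrs E u \<noteq> {}" and pV: "set p \<subseteq> V" and sel: "sel_ok V sel"
    and lam: "lam > 0" and dl: "\<And>i. i < length p \<Longrightarrow> 2 * lam * real (deg E (p ! i)) \<le> 1"
    and S: "hd p \<in> S" "last p \<notin> S"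
  shows "(\<integral>\<^sup>+st'. pot E p lam (fst st') \<partial>rpull_step V E sel (S, h))
           \<le> ennreal (exp (- lam)) * pot E p lam S"
proof -
  define j where "j = jdx p S"
  define a where "a = p ! j"
  define b where "b = p ! Suc j"
  note J = jdx_props[OF S, folded j_def]
  have jL: "Suc j < length p" using J(1) by auto
  have ab: "E a b" unfolding a_def b_def using adj[OF jL] .
  have aS: "a \<in> S" unfolding a_def using J(2) .
  have bV: "b \<in> V - S" unfolding b_def using J(3) pV jL by auto
  define A where "A = (\<lambda>N::nat\<Rightarrow>nat. \<exists>w\<in>nbrs E a - S - {b}. N w = a)"
  define e1 where "e1 = exp (- lam * real (1 + 2 * deg E b))"
  define G where "G = (\<lambda>N. (if A N then exp (- lam) else if N b = a then e1 else 1))"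
  define Q where "Q = (\<lambda>u. pmf_of_set (nbrs E u))"
  define P where "P = Pi_pmf (V - S) 0 Q"
  have finV: "finite V" using gr unfolding graph_def by auto
  have Nprop: "N u \<in> nbrs E u" if "N \<in> set_pmf P" "u \<in> V - S" for N u
  proof -
    have "N u \<in> set_pmf (Q u)" using that finV unfolding P_def
      by (auto simp: set_Pi_pmf PiE_dflt_def)
    thus ?thesis unfolding Q_def using nne that(2) fin_nbrs by auto
  qed
  have pick: "\<exists>u\<in>T. u \<in> V - S \<and> u \<in> nbrs E a \<and> N u = a"
    if N: "N \<in> set_pmf P" and T: "T \<in> set_pmf (sel (h @ [N]) S N)" and w: "w \<in> V - S" "N w = a" for N T w
  proof -
    have "a \<in> active V S N" using aS w unfolding active_def req_def by auto
    then obtain u where u: "u \<in> T" "u \<in> req V S N a" using sel T unfolding sel_ok_def by blast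
    hence uV: "u \<in> V - S" "N u = a" unfolding req_def by auto
    hence "a \<in> nbrs E u" using Nprop[OF N] by metis
    hence "u \<in> nbrs E a" using gr unfolding graph_def nbrs_def by auto
    thus ?thesis using u uV by auto
  qed
  have Snb: "nbrs E a \<subseteq> V" using gr unfolding graph_def nbrs_def by auto
  have key: "pot E p lam (S \<union> T) \<le> pot E p lam S * ennreal (G N)"
    if N: "N \<in> set_pmf P" and T: "T \<in> set_pmf (sel (h @ [N]) S N)" for N T
  proof (cases "A N")
    case True
    then obtain w where w: "w \<in> nbrs E a - S - {b}" "N w = a" unfolding A_def by auto
    obtain u where u: "u \<in> T" "u \<in> V - S" "u \<in> nbrs E a" using pick[OF N T, of w] w Snb by blast
    have "pot E p lam (S \<union> T) \<le> pot E p lam S * ennreal (exp (- lam * real 1))"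
    proof (rule pot_le[OF _ S])
      show "Phi E p (S \<union> T) + 1 \<le> Phi E p S" if "last p \<notin> S \<union> T"
        using Phi_dec[OF S _ that] u unfolding j_def[symmetric] a_def[symmetric] by blast
    qed (use lam in auto)
    thus ?thesis unfolding G_def using True by simp
  next
    case False
    show ?thesis
    proof (cases "N b = a")
      case True
      obtain u where u: "u \<in> T" "u \<in> V - S" "u \<in> nbrs E a" "N u = a" using pick[OF N T, of b] True bV by blast
      have "u = b" using False u unfolding A_def by auto
      hence bT: "p ! Suc (jdx p S) \<in> S \<union> T" using u b_def j_def by auto
      have "pot E p lam (S \<union> T) \<le> pot E p lam S * ennreal (exp (- lam * real (1 + 2 * deg E b)))"
      proof (rule pot_le[OF _ S])
        show "Phi E p (S \<union> T) + (1 + 2 * deg E b) \<le> Phi E p S" if "last p \<notin> S \<union> T"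
          using Phi_next[OF S _ that bT] unfolding j_def[symmetric] b_def[symmetric] by simp
      qed (use lam in auto)
      thus ?thesis unfolding G_def e1_def using True False by simp
    next
      case F2: False
      have "pot E p lam (S \<union> T) \<le> pot E p lam S * ennreal (exp (- lam * real 0))"
      proof (rule pot_le[OF _ S])
        show "Phi E p (S \<union> T) + 0 \<le> Phi E p S" if "last p \<notin> S \<union> T"
          using Phi_mono[OF S _ that] by simp
      qed (use lam in auto)
      thus ?thesis unfolding G_def using False F2 by simp
    qed
  qed
  have "(\<integral>\<^sup>+st'. pot E p lam (fst st') \<partial>rpull_step V E sel (S, h))
        = (\<integral>\<^sup>+N. \<integral>\<^sup>+T. pot E p lam (S \<union> T) \<partial>sel (h @ [N]) S N \<partial>P)"
    unfolding rpull_step_def P_def Q_def by simp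
  also have "\<dots> \<le> (\<integral>\<^sup>+N. pot E p lam S * ennreal (G N) \<partial>P)"
  proof (rule nn_integral_mono_AE, rule AE_pmfI)
    fix N assume N: "N \<in> set_pmf P"
    have "(\<integral>\<^sup>+T. pot E p lam (S \<union> T) \<partial>sel (h @ [N]) S N) \<le> (\<integral>\<^sup>+T. pot E p lam S * ennreal (G N) \<partial>sel (h @ [N]) S N)"
      by (rule nn_integral_mono_AE, rule AE_pmfI) (rule key[OF N])
    also have "\<dots> = pot E p lam S * ennreal (G N)" by simp
    finally show "(\<integral>\<^sup>+T. pot E p lam (S \<union> T) \<partial>sel (h @ [N]) S N) \<le> pot E p lam S * ennreal (G N)" .
  qed
  also have "\<dots> = pot E p lam S * (\<integral>\<^sup>+N. ennreal (G N) \<partial>P)"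
    by (simp add: nn_integral_cmult)
  also have "(\<integral>\<^sup>+N. ennreal (G N) \<partial>P) \<le> ennreal (exp (- lam))"
    unfolding G_def A_def e1_def P_def Q_def
    using G_int[OF nne lam bV ab dl[OF jL, folded b_def]] by simp
  hence "pot E p lam S * (\<integral>\<^sup>+N. ennreal (G N) \<partial>P) \<le> pot E p lam S * ennreal (exp (- lam))"
    by (rule mult_left_mono) simp
  finally show ?thesis by (simp add: mult.commute)
qed

end

lemma iter_bound:
  fixes step :: "'s \<Rightarrow> 's pmf" and F :: "'s \<Rightarrow> ennreal"
  assumes inv: "\<And>st st'. I st \<Longrightarrow> st' \<in> set_pmf (step st) \<Longrightarrow> I st'"
    and bnd: "\<And>st. I st \<Longrightarrow> (\<integral>\<^sup>+st'. F st' \<partial>step st) \<le> a * F st" and I0: "I s0"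
  shows "(\<forall>st\<in>set_pmf (((\<lambda>p. bind_pmf p step) ^^ t) (return_pmf s0)). I st) \<and>
    (\<integral>\<^sup>+st. F st \<partial>(((\<lambda>p. bind_pmf p step) ^^ t) (return_pmf s0))) \<le> a ^ t * F s0"
proof (induction t)
  case 0
  thus ?case using I0 by simp
next
  case (Suc t)
  define M where "M = ((\<lambda>p. bind_pmf p step) ^^ t) (return_pmf s0)"
  have IH1: "\<forall>st\<in>set_pmf M. I st" and IH2: "(\<integral>\<^sup>+st. F st \<partial>M) \<le> a ^ t * F s0"
    using Suc unfolding M_def by auto
  have eq: "((\<lambda>p. bind_pmf p step) ^^ Suc t) (return_pmf s0) = bind_pmf M step" unfolding M_def by simp
  have "\<forall>st\<in>set_pmf (bind_pmf M step). I st" using IH1 inv by (auto simp: set_bind_pmf)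
  moreover have "(\<integral>\<^sup>+st. F st \<partial>(bind_pmf M step)) \<le> a ^ Suc t * F s0"
  proof -
    have "(\<integral>\<^sup>+st. F st \<partial>(bind_pmf M step)) = (\<integral>\<^sup>+st. (\<integral>\<^sup>+st'. F st' \<partial>step st) \<partial>M)" by simp
    also have "\<dots> \<le> (\<integral>\<^sup>+st. a * F st \<partial>M)"
      by (rule nn_integral_mono_AE, rule AE_pmfI) (use IH1 bnd in auto)
    also have "\<dots> = a * (\<integral>\<^sup>+st. F st \<partial>M)" by (simp add: nn_integral_cmult)
    also have "\<dots> \<le> a * (a ^ t * F s0)" by (rule mult_left_mono[OF IH2]) simp
    finally show ?thesis by (simp add: mult.assoc)
  qed
  ultimately show ?case unfolding eq by blast
qed

lemma rpull_step_mono: "st' \<in> set_pmf (rpull_step V E sel st) \<Longrightarrow> fst st \<subseteq> fst st'"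
  unfolding rpull_step_def by (cases st) auto

lemma tree_graph: "is_tree V E \<Longrightarrow> graph V E" unfolding is_tree_def by auto

lemma tree_path: "is_tree V E \<Longrightarrow> u \<in> V \<Longrightarrow> v \<in> V \<Longrightarrow> \<exists>p. is_path V E p \<and> hd p = u \<and> last p = v"
  unfolding is_tree_def by metis

lemma tree_nne:
  assumes T: "is_tree V E" and n: "2 \<le> card V" and u: "u \<in> V"
  shows "nbrs E u \<noteq> {}"
proof -
  have "\<exists>v\<in>V. v \<noteq> u"
  proof (rule ccontr)
    assume "\<not> ?thesis"
    hence "V \<subseteq> {u}" by auto
    hence "card V \<le> 1" using card_mono[of "{u}" V] by auto
    thus False using n by simp
  qed
  then obtain v where v: "v \<in> V" "v \<noteq> u" by auto
  obtain q where q: "is_path V E q" "hd q = u" "last q = v" using tree_path[OF T u v(1)] by auto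
  have qne: "q \<noteq> []" using q unfolding is_path_def by auto
  have "length q \<noteq> 1"
  proof
    assume "length q = 1"
    then obtain y where "q = [y]" by (cases q) auto
    thus False using q v by auto
  qed
  hence L: "Suc 0 < length q" using qne by (cases q) auto
  hence "E (q ! 0) (q ! Suc 0)" using q unfolding is_path_def by auto
  hence "q ! Suc 0 \<in> nbrs E u" using q qne by (simp add: nbrs_def hd_conv_nth)
  thus ?thesis by auto
qed

lemma path_le:
  assumes T: "is_tree V E" and p: "is_path V E p"
  shows "sum_list (map (deg E) p) \<le> max_path_deg V E"
proof -
  have finV: "finite V" using T unfolding is_tree_def graph_def by auto
  have fin: "finite {p. is_path V E p}"
    by (rule finite_subset[OF _ finite_subset_distinct[OF finV]]) (auto simp: is_path_def)
  have eq: "{(\<Sum>w\<leftarrow>p. deg E w) | p. is_path V E p} = (\<lambda>p. sum_list (map (deg E) p)) ` {p. is_path V E p}"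
    by auto
  show ?thesis unfolding max_path_deg_def eq using fin p by (intro Max_ge) auto
qed

lemma deg_le:
  assumes "finite V" "u \<in> V" shows "deg E u \<le> max_deg V E"
  unfolding max_deg_def using assms by (intro Max_ge) auto

lemma (in pth) Phi_init:
  assumes "hd p = r"
  shows "Phi E p {r} \<le> 3 * sum_list (map (deg E) p)"
proof -
  have J: "jdx p {r} = 0"
  proof -
    have "{i. i < length p \<and> p ! i \<in> {r}} = {0}"
    proof (intro equalityI subsetI)
      fix i assume "i \<in> {i. i < length p \<and> p ! i \<in> {r}}"
      hence "i < length p" "p ! i = p ! 0" using assms pne by (auto simp: hd_conv_nth)
      thus "i \<in> {0}" using dist pne nth_eq_iff_index_eq by fastforce
    qed (use assms pne in \<open>auto simp: hd_conv_nth\<close>)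
    thus ?thesis unfolding jdx_def by simp
  qed
  have c: "card (nbrs E (p ! 0) - {r}) \<le> deg E (p ! 0)"
    unfolding deg_def by (intro card_mono fin_nbrs) auto
  have "sum_list (map (deg E) p) = (\<Sum>i<length p. deg E (p ! i))"
    by (simp add: sum_list_sum_nth atLeast0LessThan)
  also have "{..<length p} = insert 0 {0<..<length p}" using pne by auto
  also have "(\<Sum>i\<in>insert 0 {0<..<length p}. deg E (p ! i)) = deg E (p ! 0) + (\<Sum>i\<in>{0<..<length p}. deg E (p ! i))"
    by (subst sum.insert) auto
  finally have "sum_list (map (deg E) p) = deg E (p ! 0) + (\<Sum>i\<in>{0<..<length p}. deg E (p ! i))" .
  thus ?thesis unfolding Phi_def J using c by linarith
qed


lemma node_bound:
  assumes T: "is_tree V E" and n: "2 \<le> card V" and r: "r \<in> V" and x: "x \<in> V"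
    and sel: "sel_ok V sel" and lam: "lam > 0" and dl: "2 * lam * real (max_deg V E) \<le> 1"
  shows "measure_pmf.prob (rpull V E sel r t) {st. x \<notin> fst st}
           \<le> exp (lam * (3 * real (max_path_deg V E) - real t))"
proof -
  define I where "I = (\<lambda>st::nat set \<times> (nat \<Rightarrow> nat) list. r \<in> fst st)"
  have inv: "\<And>st st'. I st \<Longrightarrow> st' \<in> set_pmf (rpull_step V E sel st) \<Longrightarrow> I st'"
    unfolding I_def using rpull_step_mono by blast
  have supp: "\<forall>st\<in>set_pmf (rpull V E sel r t). I st"
    using iter_bound[of I "rpull_step V E sel" "\<lambda>_. 0" 1 "({r}, [])" t, OF inv]
    unfolding rpull_def I_def by simp
  have gr: "graph V E" using T by (rule tree_graph)
  have finV: "finite V" using gr unfolding graph_def by auto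
  have bpos: "exp (lam * (3 * real (max_path_deg V E) - real t)) \<ge> 0" by simp
  show ?thesis
  proof (cases "x = r")
    case True
    have "measure_pmf.prob (rpull V E sel r t) {st. x \<notin> fst st} = 0"
      using supp True unfolding I_def measure_pmf_zero_iff by auto
    thus ?thesis using bpos by simp
  next
    case False
    obtain p where p: "is_path V E p" "hd p = r" "last p = x" using tree_path[OF T r x] by auto
    interpret pth V E p
      using p gr unfolding is_path_def by unfold_locales auto
    have pV: "set p \<subseteq> V" using p unfolding is_path_def by auto
    have nne: "\<forall>u\<in>V. nbrs E u \<noteq> {}" using tree_nne[OF T n] by auto
    have dli: "2 * lam * real (deg E (p ! i)) \<le> 1" if "i < length p" for i
    proof -
      have "p ! i \<in> V" using pV that by auto
      hence "real (deg E (p ! i)) \<le> real (max_deg V E)" using deg_le[OF finV] by simp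
      hence "2 * lam * real (deg E (p ! i)) \<le> 2 * lam * real (max_deg V E)" using lam by simp
      thus ?thesis using dl by linarith
    qed
    define F where "F = (\<lambda>st::nat set \<times> (nat \<Rightarrow> nat) list. pot E p lam (fst st))"
    have bnd: "(\<integral>\<^sup>+st'. F st' \<partial>rpull_step V E sel st) \<le> ennreal (exp (- lam)) * F st" if "I st" for st
    proof (cases st)
      case (Pair S h)
      have rS: "hd p \<in> S" using that p Pair unfolding I_def by auto
      show ?thesis
      proof (cases "last p \<in> S")
        case True
        have "(\<integral>\<^sup>+st'. F st' \<partial>rpull_step V E sel st) = (\<integral>\<^sup>+st'. 0 \<partial>rpull_step V E sel st)"
        proof (rule nn_integral_cong_AE, rule AE_pmfI)
          fix st' assume "st' \<in> set_pmf (rpull_step V E sel st)"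
          hence "S \<subseteq> fst st'" using rpull_step_mono Pair by fastforce
          thus "F st' = 0" unfolding F_def pot_def using True by auto
        qed
        thus ?thesis by simp
      next
        case False
        show ?thesis unfolding F_def Pair fst_conv
          by (rule step_bound[OF nne pV sel lam dli rS False])
      qed
    qed
    have main: "(\<integral>\<^sup>+st. F st \<partial>rpull V E sel r t) \<le> ennreal (exp (- lam)) ^ t * F ({r}, [])"
      using iter_bound[of I "rpull_step V E sel" F "ennreal (exp (- lam))" "({r}, [])" t, OF inv bnd]
      unfolding rpull_def I_def by simp
    have F0: "F ({r}, []) = ennreal (exp (lam * real (Phi E p {r})))"
      unfolding F_def pot_def using p False by auto
    have Phi0: "real (Phi E p {r}) \<le> 3 * real (max_path_deg V E)"
      using Phi_init[OF p(2)] path_le[OF T p(1)] by linarith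
    have "emeasure (rpull V E sel r t) {st. x \<notin> fst st} = (\<integral>\<^sup>+st. indicator {st. x \<notin> fst st} st \<partial>rpull V E sel r t)"
      by simp
    also have "\<dots> \<le> (\<integral>\<^sup>+st. F st \<partial>rpull V E sel r t)"
    proof (rule nn_integral_mono_AE, rule AE_pmfI)
      fix st assume st: "st \<in> set_pmf (rpull V E sel r t)"
      show "indicator {st. x \<notin> fst st} st \<le> F st"
      proof (cases "x \<in> fst st")
        case True thus ?thesis by simp
      next
        case xn: False
        have "1 \<le> exp (lam * real (Phi E p (fst st)))" using lam by simp
        hence "ennreal 1 \<le> ennreal (exp (lam * real (Phi E p (fst st))))" by (rule ennreal_leI)
        thus ?thesis using xn supp st p unfolding F_def pot_def I_def by auto
      qed
    qed
    also have "\<dots> \<le> ennreal (exp (- lam)) ^ t * ennreal (exp (lam * real (Phi E p {r})))"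
      using main F0 by simp
    also have "\<dots> = ennreal (exp (lam * (real (Phi E p {r}) - real t)))"
    proof -
      have "exp (- lam) ^ t = exp (real t * (- lam))" by (simp only: exp_of_nat_mult)
      hence "exp (- lam) ^ t * exp (lam * real (Phi E p {r})) = exp (lam * (real (Phi E p {r}) - real t))"
        by (simp add: exp_add[symmetric] algebra_simps)
      thus ?thesis by (simp add: ennreal_power ennreal_mult[symmetric])
    qed
    also have "\<dots> \<le> ennreal (exp (lam * (3 * real (max_path_deg V E) - real t)))"
      using Phi0 lam by (intro ennreal_leI) (simp add: mult_left_mono)
    finally show ?thesis
      by (simp add: measure_pmf.emeasure_eq_measure)
  qed
qed

lemma main_sel:
  assumes T: "is_tree V E" and r: "r \<in> V" and sel: "sel_ok V sel"
    and t: "real t \<ge> 4 * (real (max_path_deg V E) + real (max_deg V E) * ln (real (card V)))"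
  shows "all_informed_prob V E sel r t \<ge> 1 - real (card V) powr (- 1)"
proof -
  have gr: "graph V E" using T by (rule tree_graph)
  have finV: "finite V" using gr unfolding graph_def by auto
  have Vne: "V \<noteq> {}" using T unfolding is_tree_def by auto
  have c1: "card V \<ge> 1" using finV Vne by (simp add: Suc_le_eq card_gt_0_iff)
  define M where "M = rpull V E sel r t"
  have eqc: "{st. V \<subseteq> fst st} = space (measure_pmf M) - (\<Union>x\<in>V. {st. x \<notin> fst st})" by auto
  have aip: "all_informed_prob V E sel r t = 1 - measure_pmf.prob M (\<Union>x\<in>V. {st. x \<notin> fst st})"
    unfolding all_informed_prob_def M_def[symmetric] eqc by (rule measure_pmf.prob_compl) simp
  show ?thesis
  proof (cases "card V = 1")
    case True
    have "all_informed_prob V E sel r t \<ge> 0" unfolding all_informed_prob_def by simp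
    thus ?thesis using True by simp
  next
    case False
    hence n: "2 \<le> card V" using c1 by simp
    define n where "n = real (card V)"
    have npos: "n \<ge> 2" unfolding n_def using n by simp
    define D where "D = real (max_deg V E)"
    have D1: "D \<ge> 1"
    proof -
      have "nbrs E r \<noteq> {}" using tree_nne[OF T n r] .
      moreover have "finite (nbrs E r)" using pth.fin_nbrs[of V E "[r]"] gr
        unfolding pth_def by auto
      ultimately have "deg E r \<ge> 1" unfolding deg_def by (simp add: Suc_le_eq card_gt_0_iff)
      thus ?thesis using deg_le[OF finV r, of E] unfolding D_def by simp
    qed
    define lam where "lam = 1 / (2 * D)"
    have lam: "lam > 0" unfolding lam_def using D1 by simp
    have dl: "2 * lam * real (max_deg V E) \<le> 1" unfolding lam_def D_def[symmetric] using D1 by simp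
    define B where "B = exp (lam * (3 * real (max_path_deg V E) - real t))"
    have nb: "measure_pmf.prob M {st. x \<notin> fst st} \<le> B" if "x \<in> V" for x
      unfolding M_def B_def by (rule node_bound[OF T n r that sel lam dl])
    have lnn: "ln n \<ge> 0" using npos by simp
    have "lam * (3 * real (max_path_deg V E) - real t) \<le> lam * (- 4 * D * ln n)"
    proof -
      have "real (max_path_deg V E) \<ge> 0" by simp
      hence "3 * real (max_path_deg V E) - real t \<le> - 4 * D * ln n"
        using t unfolding n_def D_def by (simp add: algebra_simps)
      thus ?thesis using lam by (intro mult_left_mono) auto
    qed
    also have "\<dots> = - 2 * ln n"
    proof -
      have l2: "lam * (2 * D) = 1" unfolding lam_def using D1 by simp
      have "lam * (- 4 * D * ln n) = - 2 * (lam * (2 * D)) * ln n" by (simp add: algebra_simps)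
      thus ?thesis unfolding l2 by simp
    qed
    finally have X: "lam * (3 * real (max_path_deg V E) - real t) \<le> - 2 * ln n" .
    have "B \<le> exp (- 2 * ln n)" unfolding B_def using X by (simp only: exp_le_cancel_iff)
    also have "exp (- 2 * ln n) = 1 / n ^ 2"
    proof -
      have e: "exp (real 2 * ln n) = exp (ln n) ^ 2" by (rule exp_of_nat_mult)
      have "exp (ln n) = n" using npos by simp
      hence e2: "exp (2 * ln n) = n ^ 2" using e by simp
      have "exp (- 2 * ln n) = inverse (exp (2 * ln n))"
        by (metis exp_minus minus_mult_left)
      thus ?thesis unfolding e2 by (simp add: inverse_eq_divide)
    qed
    finally have Bn: "B \<le> 1 / n ^ 2" .
    have "measure_pmf.prob M (\<Union>x\<in>V. {st. x \<notin> fst st}) \<le> (\<Sum>x\<in>V. measure_pmf.prob M {st. x \<notin> fst st})"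
      by (rule measure_pmf.finite_measure_subadditive_finite[OF finV]) auto
    also have "\<dots> \<le> (\<Sum>x\<in>V. 1 / n ^ 2)"
    proof (rule sum_mono)
      fix x assume "x \<in> V" thus "measure_pmf.prob M {st. x \<notin> fst st} \<le> 1 / n ^ 2" using nb[of x] Bn by linarith
    qed
    also have "\<dots> = n * (1 / n ^ 2)" unfolding n_def by simp
    also have "\<dots> = 1 / n" using npos by (simp add: power2_eq_square)
    also have "\<dots> = n powr (- 1)" using npos by (simp add: powr_minus_divide)
    finally show ?thesis unfolding aip n_def by linarith
  qed
qed

theorem lemma2:
  "\<exists>C::real. C > 0 \<and> (\<exists>c::real. c \<ge> 1 \<and>
     (\<forall>V E r t. is_tree V E \<longrightarrow> r \<in> V \<longrightarrow>
        real t \<ge> C * (real (max_path_deg V E) + real (max_deg V E) * ln (real (card V))) \<longrightarrow>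
          all_informed_prob V E (random_sel V) r t \<ge> 1 - real (card V) powr (- c)
        \<and> (\<forall>adv. all_informed_prob V E (adv_sel V adv) r t \<ge> 1 - real (card V) powr (- c))))"
proof (intro exI conjI allI impI)
  show "(4::real) > 0" by simp
  show "(1::real) \<ge> 1" by simp
  fix V E r t adv
  assume T: "is_tree V E" and r: "r \<in> V"
    and t: "real t \<ge> 4 * (real (max_path_deg V E) + real (max_deg V E) * ln (real (card V)))"
  have finV: "finite V" using T unfolding is_tree_def graph_def by auto
  show "all_informed_prob V E (random_sel V) r t \<ge> 1 - real (card V) powr (- 1)"
    by (rule main_sel[OF T r sel_ok_random[OF finV] t])
  show "all_informed_prob V E (adv_sel V adv) r t \<ge> 1 - real (card V) powr (- 1)"
    by (rule main_sel[OF T r sel_ok_adv t])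
qed

end
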